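(* Consider, for each $p$, the model $Y = X\beta^\star + Z$ described in the context, with $\beta^\star \in \mathcal{B}_{p,s}$ and the estimator $\hat\beta_{\mathrm{MLE}} \in \arg\min_{\beta \in \mathcal{B}_{p,s}} \|\Sigma^{-1}(Y - X\beta)\|_2^2$. Fix $\delta \in (0,1)$. 1. If $s = o(p)$ and $s \to +\infty$ as $p \to +\infty$, set $n^\star := 2 s \log(p/s)$. 2. If $s = \alpha p$ for some constant $\alpha \in (0,1)$, set $n^\star := 2 h(\alpha) p$. In both settings, if there exists $\varepsilon > 0$ such that (for all sufficiently large $p$) $$ n_1 \log\left(1 + \frac{\delta s}{2\sigma_1^2}\right) + n_2 \log\left(1 + \frac{\delta s}{2\sigma_2^2}\right) \ge (1+\varepsilon) n^\star, $$ then $$ \mathbb{P}\Big( |\operatorname{supp}(\beta^\star) \,\triangle\, \operatorname{supp}(\hat\beta_{\mathrm{MLE}})| < 2\delta s \Big) \ge 1 - \exp\{-(\varepsilon + o(1)) n^\star/2\} \xrightarrow{p\to+\infty} 1 .$$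
   Context: All quantities may depend on $p$, and asymptotics are as $p \to +\infty$. Sample sizes $n_1, n_2 \ge 1$, $n = n_1 + n_2$. The design $X \in \mathbb{R}^{n\times p}$ has i.i.d. $\mathcal{N}(0,1)$ entries. Noise levels satisfy $0 < \sigma_1^2 < \sigma_2^2$; $\Sigma = \begin{pmatrix} \sigma_1 I_{n_1} & 0 \\ 0 & \sigma_2 I_{n_2}\end{pmatrix}$, $W \sim \mathcal{N}(0, I_n)$ independent of $X$, and $Z = \Sigma W$. The signal $\beta^\star$ is deterministic and belongs to $\mathcal{B}_{p,s} := \{\beta \in \{0,1\}^p : \|\beta\|_0 = s\}$, where $\|\beta\|_0$ is the number of nonzero coordinates. $\operatorname{supp}(\beta) = \{i : \beta_i \neq 0\}$, $A \triangle B = (A\cup B)\setminus(A\cap B)$. $h(x) = -x\log x - (1-x)\log(1-x)$ is the binary entropy (natural logarithm). The estimator $\hat\beta_{\mathrm{MLE}}$ (the maximum likelihood estimator over $\mathcal{B}_{p,s}$) uses knowledge of $\Sigma$. *)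

theory Defs
  imports "HOL-Probability.Probability" "HOL-Library.Landau_Symbols"
begin

definition bin_entropy :: "real \<Rightarrow> real" where
  "bin_entropy x = - x * ln x - (1 - x) * ln (1 - x)"

text \<open>Vectors in R^p are represented as functions nat => real vanishing outside {..<p}.\<close>
definition supp_vec :: "(nat \<Rightarrow> real) \<Rightarrow> nat set" where
  "supp_vec b = {i. b i \<noteq> 0}"

definition Bps :: "nat \<Rightarrow> nat \<Rightarrow> (nat \<Rightarrow> real) set" where
  "Bps p s = {b. (\<forall>i. b i = 0 \<or> b i = 1) \<and> (\<forall>i\<ge>p. b i = 0) \<and> card (supp_vec b) = s}"

definition symdiff :: "'a set \<Rightarrow> 'a set \<Rightarrow> 'a set" where
  "symdiff A B = (A \<union> B) - (A \<inter> B)"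

text \<open>Sample space: the design X (entries x(i,j), i<n, j<p) and the noise W (entries w i, i<n),
  all i.i.d. standard Gaussian.\<close>
definition gauss_model :: "nat \<Rightarrow> nat \<Rightarrow> ((nat \<times> nat \<Rightarrow> real) \<times> (nat \<Rightarrow> real)) measure" where
  "gauss_model n p =
     (PiM ({..<n} \<times> {..<p}) (\<lambda>_. density lborel std_normal_density))
     \<Otimes>\<^sub>M (PiM {..<n} (\<lambda>_. density lborel std_normal_density))"

text \<open>Diagonal entry of Sigma: sigma1 for the first n1 rows, sigma2 for the remaining ones.\<close>
definition noise_sd :: "nat \<Rightarrow> real \<Rightarrow> real \<Rightarrow> nat \<Rightarrow> real" where
  "noise_sd n1 \<sigma>1 \<sigma>2 i = (if i < n1 then \<sigma>1 else \<sigma>2)"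

definition obs :: "nat \<Rightarrow> nat \<Rightarrow> real \<Rightarrow> real \<Rightarrow> (nat \<Rightarrow> real)
    \<Rightarrow> (nat \<times> nat \<Rightarrow> real) \<times> (nat \<Rightarrow> real) \<Rightarrow> nat \<Rightarrow> real" where
  "obs n1 p \<sigma>1 \<sigma>2 bstar \<omega> i =
     (\<Sum>j<p. fst \<omega> (i, j) * bstar j) + noise_sd n1 \<sigma>1 \<sigma>2 i * snd \<omega> i"

definition mle_obj :: "nat \<Rightarrow> nat \<Rightarrow> nat \<Rightarrow> real \<Rightarrow> real \<Rightarrow> (nat \<Rightarrow> real)
    \<Rightarrow> (nat \<times> nat \<Rightarrow> real) \<times> (nat \<Rightarrow> real) \<Rightarrow> (nat \<Rightarrow> real) \<Rightarrow> real" where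
  "mle_obj n1 n2 p \<sigma>1 \<sigma>2 bstar \<omega> b =
     (\<Sum>i<n1 + n2. ((obs n1 p \<sigma>1 \<sigma>2 bstar \<omega> i - (\<Sum>j<p. fst \<omega> (i, j) * b j))
                    / noise_sd n1 \<sigma>1 \<sigma>2 i)\<^sup>2)"

definition mle_set :: "nat \<Rightarrow> nat \<Rightarrow> nat \<Rightarrow> nat \<Rightarrow> real \<Rightarrow> real \<Rightarrow> (nat \<Rightarrow> real)
    \<Rightarrow> (nat \<times> nat \<Rightarrow> real) \<times> (nat \<Rightarrow> real) \<Rightarrow> (nat \<Rightarrow> real) set" where
  "mle_set n1 n2 p s \<sigma>1 \<sigma>2 bstar \<omega> =
     {b \<in> Bps p s. \<forall>b' \<in> Bps p s.
        mle_obj n1 n2 p \<sigma>1 \<sigma>2 bstar \<omega> b \<le> mle_obj n1 n2 p \<sigma>1 \<sigma>2 bstar \<omega> b'}"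

definition recovery_prob :: "nat \<Rightarrow> nat \<Rightarrow> nat \<Rightarrow> nat \<Rightarrow> real \<Rightarrow> real \<Rightarrow> (nat \<Rightarrow> real) \<Rightarrow> real \<Rightarrow> real" where
  "recovery_prob n1 n2 p s \<sigma>1 \<sigma>2 bstar \<delta> =
     measure (gauss_model (n1 + n2) p)
       {\<omega> \<in> space (gauss_model (n1 + n2) p).
          \<forall>b \<in> mle_set n1 n2 p s \<sigma>1 \<sigma>2 bstar \<omega>.
             real (card (symdiff (supp_vec bstar) (supp_vec b))) < 2 * \<delta> * real s}"

end

theory Submission
  imports Defs
begin

abbreviation "N \<equiv> density lborel std_normal_density"

lemma sN: "sets N = sets borel" by simp

lemma meas_exp: "f \<in> borel_measurable M \<Longrightarrow> (\<lambda>x. exp (f x :: real)) \<in> borel_measurable M"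
  by (rule measurable_compose[OF _ borel_measurable_exp])

lemma meas_ennreal: "f \<in> borel_measurable M \<Longrightarrow> (\<lambda>x. ennreal (f x)) \<in> borel_measurable M"
  by (rule measurable_compose[OF _ measurable_ennreal])

lemma meas_const: "(\<lambda>x. c :: 'b::topological_space) \<in> borel_measurable M" by simp

lemmas meas_intros = meas_ennreal meas_exp borel_measurable_diff borel_measurable_add borel_measurable_divide
  borel_measurable_uminus borel_measurable_power borel_measurable_times meas_const

lemma nn_integral_normal_density: "0 < \<sigma> \<Longrightarrow> (\<integral>\<^sup>+x. ennreal (normal_density \<mu> \<sigma> x) \<partial>lborel) = 1"
proof -
  assume "0 < \<sigma>"
  then interpret prob_space "density lborel (normal_density \<mu> \<sigma>)" by (rule prob_space_normal_density)
  have "emeasure (density lborel (normal_density \<mu> \<sigma>)) UNIV = 1"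
    using emeasure_space_1 by simp
  then show ?thesis by (simp add: emeasure_density)
qed

lemma mgf_std_normal: "(\<integral>\<^sup>+w. ennreal (exp (c * w)) \<partial>N) = ennreal (exp (c\<^sup>2 / 2))"
proof -
  have eq: "std_normal_density w * exp (c * w) = exp (c\<^sup>2/2) * normal_density c 1 w" for w
  proof -
    have "exp (c * w) * exp (- w\<^sup>2 / 2) = exp (c\<^sup>2/2) * exp (- (w - c)\<^sup>2 / 2)"
      unfolding mult_exp_exp by (rule arg_cong[where f=exp]) (simp add: power2_eq_square field_simps)
    then show ?thesis unfolding normal_density_def by (simp add: mult.commute)
  qed
  have "(\<integral>\<^sup>+w. ennreal (exp (c * w)) \<partial>N) = (\<integral>\<^sup>+w. ennreal (std_normal_density w) * ennreal (exp (c * w)) \<partial>lborel)"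
    by (subst nn_integral_density) auto
  also have "\<dots> = (\<integral>\<^sup>+w. ennreal (exp (c\<^sup>2/2)) * ennreal (normal_density c 1 w) \<partial>lborel)"
    by (intro nn_integral_cong) (simp add: ennreal_mult'[symmetric] eq)
  also have "\<dots> = ennreal (exp (c\<^sup>2/2))"
    by (subst nn_integral_cmult) (auto simp: nn_integral_normal_density)
  finally show ?thesis .
qed

lemma gauss_damp:
  assumes d: "0 < d" and s: "0 < s"
  shows "(\<integral>\<^sup>+y. ennreal (normal_density 0 (sqrt d) y) * ennreal (exp (- y\<^sup>2 / (8 * s\<^sup>2))) \<partial>lborel)
         = ennreal (1 / sqrt (1 + d / (4 * s\<^sup>2)))"
proof -
  define \<tau> where "\<tau> = sqrt (4 * s\<^sup>2 * d / (4 * s\<^sup>2 + d))"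
  have s2: "0 < s\<^sup>2" using s by simp
  have t2: "\<tau>\<^sup>2 = 4 * s\<^sup>2 * d / (4 * s\<^sup>2 + d)" unfolding \<tau>_def using d s2 by simp
  have tpos: "0 < \<tau>" unfolding \<tau>_def using d s2 by (simp add: add_pos_pos)
  define c where "c = 1 / sqrt (1 + d / (4 * s\<^sup>2))"
  have c2: "c = \<tau> / sqrt d"
  proof -
    have a: "\<tau> / sqrt d = sqrt (4 * s\<^sup>2 / (4 * s\<^sup>2 + d))"
      unfolding \<tau>_def real_sqrt_divide[symmetric] using d s2 by (intro arg_cong[where f=sqrt]) (simp add: divide_simps)
    have b: "c = sqrt (1 / (1 + d / (4 * s\<^sup>2)))" unfolding c_def by (simp add: real_sqrt_divide)
    have "1 / (1 + d / (4 * s\<^sup>2)) = 4 * s\<^sup>2 / (4 * s\<^sup>2 + d)" using s2 d by (simp add: field_simps)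
    then show ?thesis using a b by simp
  qed
  have eq: "normal_density 0 (sqrt d) y * exp (- y\<^sup>2 / (8 * s\<^sup>2)) = c * normal_density 0 \<tau> y" for y
  proof -
    have e: "- y\<^sup>2 / (2 * d) + - y\<^sup>2 / (8 * s\<^sup>2) = - y\<^sup>2 / (2 * \<tau>\<^sup>2)"
      unfolding t2 using d s2 by (simp add: field_simps)
    have "normal_density 0 (sqrt d) y * exp (- y\<^sup>2 / (8 * s\<^sup>2))
        = 1 / sqrt (2 * pi * d) * (exp (- y\<^sup>2 / (2 * d)) * exp (- y\<^sup>2 / (8 * s\<^sup>2)))"
      unfolding normal_density_def using d by simp
    also have "\<dots> = 1 / sqrt (2 * pi * d) * exp (- y\<^sup>2 / (2 * \<tau>\<^sup>2))"
      unfolding mult_exp_exp e ..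
    also have "\<dots> = c * normal_density 0 \<tau> y"
    proof -
      have "sqrt (2 * pi * \<tau>\<^sup>2) = sqrt (2*pi) * \<tau>" using tpos by (simp add: real_sqrt_mult)
      moreover have "sqrt (2 * pi * d) = sqrt (2*pi) * sqrt d" by (simp add: real_sqrt_mult)
      ultimately show ?thesis unfolding normal_density_def c2 using d tpos by simp
    qed
    finally show ?thesis .
  qed
  have "(\<integral>\<^sup>+y. ennreal (normal_density 0 (sqrt d) y) * ennreal (exp (- y\<^sup>2 / (8 * s\<^sup>2))) \<partial>lborel)
      = (\<integral>\<^sup>+y. ennreal c * ennreal (normal_density 0 \<tau> y) \<partial>lborel)"
  proof (intro nn_integral_cong)
    fix y
    have "0 \<le> c" unfolding c_def using d s2 by simp
    then show "ennreal (normal_density 0 (sqrt d) y) * ennreal (exp (- y\<^sup>2 / (8 * s\<^sup>2))) = ennreal c * ennreal (normal_density 0 \<tau> y)"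
      using eq[of y] by (simp add: ennreal_mult[symmetric] del: ennreal_mult)
  qed
  also have "\<dots> = ennreal c"
    by (subst nn_integral_cmult) (auto simp: nn_integral_normal_density tpos)
  finally show ?thesis unfolding c_def .
qed

lemma prob_space_N: "prob_space N"
  by (rule prob_space_normal_density) simp

lemma indep_coords:
  assumes K: "K \<noteq> {}" and M: "\<And>k. k \<in> K \<Longrightarrow> prob_space (M k)"
  shows "prob_space.indep_vars (PiM K M) M (\<lambda>k x. x k) K"
proof -
  interpret P: prob_space "PiM K M" by (rule prob_space_PiM) (rule M)
  have d1: "distr (PiM K M) (PiM K M) (\<lambda>x. \<lambda>k\<in>K. x k) = PiM K M"
  proof -
    have "distr (PiM K M) (PiM K M) (\<lambda>x. \<lambda>k\<in>K. x k) = distr (PiM K M) (PiM K M) (\<lambda>x. x)"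
      by (rule distr_cong) (auto simp: space_PiM PiE_def extensional_def restrict_def)
    then show ?thesis by simp
  qed
  have d2: "(\<Pi>\<^sub>M k\<in>K. distr (PiM K M) (M k) (\<lambda>x. x k)) = PiM K M"
    by (rule PiM_cong) (auto simp: distr_PiM_component M)
  show ?thesis
    by (subst P.indep_vars_iff_distr_eq_PiM'[OF K]) (auto simp: d1 d2)
qed

lemma coord_std_normal:
  assumes "k \<in> K"
  shows "distributed (PiM K (\<lambda>_. N)) lborel (\<lambda>x. x k) std_normal_density"
proof -
  have "distr (PiM K (\<lambda>_. N)) lborel (\<lambda>x. x k) = distr (PiM K (\<lambda>_. N)) N (\<lambda>x. x k)"
    by (rule distr_cong) auto
  also have "\<dots> = N" by (rule distr_PiM_component) (auto simp: prob_space_N assms)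
  finally show ?thesis unfolding distributed_def using assms by auto
qed

lemma row_normal:
  fixes u :: "nat \<Rightarrow> real" and i n p :: nat
  assumes i: "i < n" and u: "\<And>j. u j = 0 \<or> u j = 1 \<or> u j = -1"
    and S: "S = {j. j < p \<and> u j \<noteq> 0}" "S \<noteq> {}"
  shows "distributed (PiM ({..<n} \<times> {..<p}) (\<lambda>_. N)) lborel (\<lambda>x. \<Sum>j<p. x (i, j) * u j)
           (normal_density 0 (sqrt (real (card S))))"
proof -
  let ?K = "{..<n} \<times> {..<p}"
  let ?P = "PiM ?K (\<lambda>_. N)"
  interpret P: prob_space ?P by (rule prob_space_PiM) (rule prob_space_N)
  have KS: "{i} \<times> S \<subseteq> ?K" using i S by auto
  have fin: "finite S" using S by auto
  have ind0: "P.indep_vars (\<lambda>_. N) (\<lambda>k x. x k) ?K"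
    by (rule indep_coords) (use i S in \<open>auto simp: prob_space_N\<close>)
  have ind1: "P.indep_vars (\<lambda>_. borel) (\<lambda>k x. u (snd k) * x k) ({i} \<times> S)"
    using P.indep_vars_compose2[OF P.indep_vars_subset[OF ind0 KS], of "\<lambda>k y. u (snd k) * y" "\<lambda>_. borel"]
    by auto
  have nd: "distributed ?P lborel (\<lambda>x. u (snd k) * x k) (normal_density 0 1)" if k: "k \<in> {i} \<times> S" for k
  proof -
    have uk: "u (snd k) \<noteq> 0" using k S by auto
    have abs1: "\<bar>u (snd k)\<bar> = 1" using u[of "snd k"] uk by auto
    have "distributed ?P lborel (\<lambda>x. 0 + u (snd k) * x k) (normal_density (0 + u (snd k) * 0) (\<bar>u (snd k)\<bar> * 1))"
      by (rule P.normal_density_affine) (use coord_std_normal[of k ?K] k KS uk in auto)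
    then show ?thesis using abs1 by simp
  qed
  have "distributed ?P lborel (\<lambda>x. \<Sum>k\<in>{i} \<times> S. u (snd k) * x k)
      (normal_density (\<Sum>k\<in>{i} \<times> S. 0) (sqrt (\<Sum>k\<in>{i} \<times> S. 1\<^sup>2)))"
    by (rule P.sum_indep_normal[OF _ _ ind1]) (use fin S nd in auto)
  moreover have "(\<Sum>k\<in>{i} \<times> S. (1::real)\<^sup>2) = real (card S)"
    by (simp add: card_cartesian_product)
  moreover have "(\<lambda>x. \<Sum>k\<in>{i} \<times> S. u (snd k) * x k) = (\<lambda>x. \<Sum>j<p. x (i, j) * u j)"
  proof
    fix x :: "nat \<times> nat \<Rightarrow> real"
    have "(\<Sum>k\<in>{i} \<times> S. u (snd k) * x k) = (\<Sum>j\<in>S. x (i, j) * u j)"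
    proof -
      have "{i} \<times> S = (\<lambda>j. (i, j)) ` S" by auto
      moreover have "inj_on (\<lambda>j. (i, j)) S" by (auto simp: inj_on_def)
      ultimately show ?thesis by (simp add: sum.reindex mult.commute)
    qed
    also have "\<dots> = (\<Sum>j<p. x (i, j) * u j)"
      by (rule sum.mono_neutral_left) (use S in auto)
    finally show "(\<Sum>k\<in>{i} \<times> S. u (snd k) * x k) = (\<Sum>j<p. x (i, j) * u j)" .
  qed
  ultimately show ?thesis by simp
qed

lemma meas_row:
  fixes u :: "nat \<Rightarrow> real"
  assumes "\<And>j. j < p \<Longrightarrow> (i, j) \<in> K"
  shows "(\<lambda>z. \<Sum>j<p. z (i, j) * u j) \<in> borel_measurable (PiM K (\<lambda>_. N))"
proof (rule borel_measurable_sum)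
  fix j assume "j \<in> {..<p}"
  then have "(i, j) \<in> K" using assms by auto
  then have "(\<lambda>z. z (i, j)) \<in> measurable (PiM K (\<lambda>_. N)) N" by (rule measurable_component_singleton)
  then have "(\<lambda>z. z (i, j)) \<in> borel_measurable (PiM K (\<lambda>_. N))"
    using measurable_cong_sets[OF refl sN] by simp
  then show "(\<lambda>z. z (i, j) * u j) \<in> borel_measurable (PiM K (\<lambda>_. N))"
    by (rule borel_measurable_times[OF _ measurable_const]) simp
qed

lemma outer_prod:
  fixes u :: "nat \<Rightarrow> real" and \<sigma> :: "nat \<Rightarrow> real" and n p :: nat
  assumes u: "\<And>j. u j = 0 \<or> u j = 1 \<or> u j = -1"
    and S: "S = {j. j < p \<and> u j \<noteq> 0}" "S \<noteq> {}"
    and \<sigma>: "\<And>i. 0 < \<sigma> i"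
  shows "(\<integral>\<^sup>+x. ennreal (\<Prod>i<n. exp (- (\<Sum>j<p. x (i, j) * u j)\<^sup>2 / (8 * (\<sigma> i)\<^sup>2)))
            \<partial>PiM ({..<n} \<times> {..<p}) (\<lambda>_. N))
         = (\<Prod>i<n. ennreal (1 / sqrt (1 + real (card S) / (4 * (\<sigma> i)\<^sup>2))))"
proof -
  let ?K = "{..<n} \<times> {..<p}"
  let ?P = "PiM ?K (\<lambda>_. N)"
  interpret P: prob_space ?P by (rule prob_space_PiM) (rule prob_space_N)
  define X where "X i x = ennreal (exp (- (\<Sum>j<p. x (i, j) * u j)\<^sup>2 / (8 * (\<sigma> i)\<^sup>2)))" for i x
  have dpos: "0 < real (card S)" using S by (simp add: card_gt_0_iff)
  show ?thesis
  proof (cases "n = 0")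
    case True
    then show ?thesis using P.emeasure_space_1 by simp
  next
    case False
    have Kne: "?K \<noteq> {}" using False S by auto
    have ind0: "P.indep_vars (\<lambda>_. N) (\<lambda>k x. x k) ?K"
      by (rule indep_coords[OF Kne]) (auto simp: prob_space_N)
    have ind1: "P.indep_vars (\<lambda>i. PiM ({i} \<times> {..<p}) (\<lambda>_. N)) (\<lambda>i \<omega>. restrict (\<lambda>k. \<omega> k) ({i} \<times> {..<p})) {..<n}"
      by (rule P.indep_vars_restrict[OF ind0]) (auto simp: disjoint_family_on_def)
    have ind2: "P.indep_vars (\<lambda>_. borel) (\<lambda>i \<omega>. X i (restrict (\<lambda>k. \<omega> k) ({i} \<times> {..<p}))) {..<n}"
      unfolding X_def
      apply (rule P.indep_vars_compose2[OF ind1])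
      subgoal for i
      proof -
        have m: "(\<lambda>z. \<Sum>j<p. z (i, j) * u j) \<in> borel_measurable (PiM ({i} \<times> {..<p}) (\<lambda>_. N))"
          by (rule meas_row) auto
        have g: "(\<lambda>y::real. ennreal (exp (- y\<^sup>2 / (8 * (\<sigma> i)\<^sup>2)))) \<in> borel_measurable borel"
          by (intro meas_intros measurable_ident_sets refl)
        show ?thesis using measurable_compose[OF m g] by simp
      qed
      done
    have eqX: "X i (restrict (\<lambda>k. \<omega> k) ({i} \<times> {..<p})) = X i \<omega>" for i \<omega>
      unfolding X_def by simp
    have "(\<integral>\<^sup>+x. (\<Prod>i<n. X i x) \<partial>?P) = (\<Prod>i<n. \<integral>\<^sup>+x. X i x \<partial>?P)"
      using P.indep_vars_nn_integral[OF _ ind2] by (simp add: eqX)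
    also have "\<dots> = (\<Prod>i<n. ennreal (1 / sqrt (1 + real (card S) / (4 * (\<sigma> i)\<^sup>2))))"
    proof (rule prod.cong[OF refl])
      fix i assume i: "i \<in> {..<n}"
      have D: "distributed ?P lborel (\<lambda>x. \<Sum>j<p. x (i, j) * u j) (normal_density 0 (sqrt (real (card S))))"
        by (rule row_normal) (use i u S in auto)
      have "(\<integral>\<^sup>+x. X i x \<partial>?P) = (\<integral>\<^sup>+y. ennreal (normal_density 0 (sqrt (real (card S))) y) * ennreal (exp (- y\<^sup>2 / (8 * (\<sigma> i)\<^sup>2))) \<partial>lborel)"
        unfolding X_def by (rule distributed_nn_integral[OF D, symmetric]) simp
      also have "\<dots> = ennreal (1 / sqrt (1 + real (card S) / (4 * (\<sigma> i)\<^sup>2)))"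
        by (rule gauss_damp[OF dpos \<sigma>])
      finally show "(\<integral>\<^sup>+x. X i x \<partial>?P) = ennreal (1 / sqrt (1 + real (card S) / (4 * (\<sigma> i)\<^sup>2)))" .
    qed
    finally show ?thesis unfolding X_def by (simp add: prod_ennreal)
  qed
qed

lemma inner_factor:
  assumes s: "0 < s"
  shows "(\<integral>\<^sup>+w. ennreal (exp (- g\<^sup>2 / (4 * s\<^sup>2) - g * w / (2 * s))) \<partial>N)
         = ennreal (exp (- g\<^sup>2 / (8 * s\<^sup>2)))"
proof -
  define c where "c = - g / (2 * s)"
  have "(\<integral>\<^sup>+w. ennreal (exp (- g\<^sup>2 / (4 * s\<^sup>2) - g * w / (2 * s))) \<partial>N)
      = (\<integral>\<^sup>+w. ennreal (exp (- g\<^sup>2 / (4 * s\<^sup>2))) * ennreal (exp (c * w)) \<partial>N)"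
    by (intro nn_integral_cong) (simp add: c_def ennreal_mult[symmetric] exp_diff[symmetric] exp_add[symmetric] del: ennreal_mult)
  also have "\<dots> = ennreal (exp (- g\<^sup>2 / (4 * s\<^sup>2))) * ennreal (exp (c\<^sup>2 / 2))"
    by (subst nn_integral_cmult) (auto simp: mgf_std_normal)
  also have "\<dots> = ennreal (exp (- g\<^sup>2 / (8 * s\<^sup>2)))"
  proof -
    have "- g\<^sup>2 / (4 * s\<^sup>2) + c\<^sup>2 / 2 = - g\<^sup>2 / (8 * s\<^sup>2)"
      using s unfolding c_def by (simp add: power2_eq_square field_simps)
    then show ?thesis by (simp add: ennreal_mult[symmetric] exp_add[symmetric] del: ennreal_mult)
  qed
  finally show ?thesis .
qed

lemma full_bound:
  fixes u :: "nat \<Rightarrow> real" and \<sigma> :: "nat \<Rightarrow> real" and n p :: nat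
  assumes u: "\<And>j. u j = 0 \<or> u j = 1 \<or> u j = -1"
    and S: "S = {j. j < p \<and> u j \<noteq> 0}" "S \<noteq> {}"
    and \<sigma>: "\<And>i. 0 < \<sigma> i"
  shows "(\<integral>\<^sup>+\<omega>. ennreal (\<Prod>i<n. exp (- (\<Sum>j<p. fst \<omega> (i, j) * u j)\<^sup>2 / (4 * (\<sigma> i)\<^sup>2)
                 - (\<Sum>j<p. fst \<omega> (i, j) * u j) * snd \<omega> i / (2 * \<sigma> i))) \<partial>gauss_model n p)
         = (\<Prod>i<n. ennreal (1 / sqrt (1 + real (card S) / (4 * (\<sigma> i)\<^sup>2))))"
proof -
  let ?PX = "PiM ({..<n} \<times> {..<p}) (\<lambda>_. N)"
  let ?PW = "PiM {..<n} (\<lambda>_. N)"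
  define G where "G i x = (\<Sum>j<p. x (i, j) * u j)" for i :: nat and x :: "nat \<times> nat \<Rightarrow> real"
  define h where "h i x w = exp (- (G i x)\<^sup>2 / (4 * (\<sigma> i)\<^sup>2) - G i x * w / (2 * \<sigma> i))" for i x w
  interpret PW: prob_space ?PW by (rule prob_space_PiM) (rule prob_space_N)
  interpret PN: prob_space N by (rule prob_space_N)
  interpret PP: product_sigma_finite "\<lambda>_. N" by standard
  have mG: "(\<lambda>\<omega>. G i (fst \<omega>)) \<in> borel_measurable (?PX \<Otimes>\<^sub>M ?PW)" if "i < n" for i
    unfolding G_def by (rule measurable_compose[OF measurable_fst meas_row]) (use that in auto)
  have mW: "(\<lambda>\<omega>. snd \<omega> i) \<in> borel_measurable (?PX \<Otimes>\<^sub>M ?PW)" if "i < n" for i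
  proof -
    have "(\<lambda>w. w i) \<in> measurable ?PW N" by (rule measurable_component_singleton) (use that in auto)
    then have "(\<lambda>w. w i) \<in> borel_measurable ?PW" using measurable_cong_sets[OF refl sN] by simp
    then show ?thesis by (rule measurable_compose[OF measurable_snd])
  qed
  have mf: "(\<lambda>\<omega>. ennreal (\<Prod>i<n. h i (fst \<omega>) (snd \<omega> i))) \<in> borel_measurable (?PX \<Otimes>\<^sub>M ?PW)"
  proof -
    have "(\<lambda>\<omega>. h i (fst \<omega>) (snd \<omega> i)) \<in> borel_measurable (?PX \<Otimes>\<^sub>M ?PW)" if i: "i < n" for i
    proof -
      show ?thesis unfolding h_def by (intro meas_intros mG[OF i] mW[OF i])
    qed
    then show ?thesis by (intro meas_ennreal borel_measurable_prod) auto
  qed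
  have "(\<integral>\<^sup>+\<omega>. ennreal (\<Prod>i<n. h i (fst \<omega>) (snd \<omega> i)) \<partial>(?PX \<Otimes>\<^sub>M ?PW))
      = (\<integral>\<^sup>+x. \<integral>\<^sup>+w. ennreal (\<Prod>i<n. h i x (w i)) \<partial>?PW \<partial>?PX)"
    using PW.nn_integral_fst[OF mf] by simp
  also have "\<dots> = (\<integral>\<^sup>+x. ennreal (\<Prod>i<n. exp (- (G i x)\<^sup>2 / (8 * (\<sigma> i)\<^sup>2))) \<partial>?PX)"
  proof (rule nn_integral_cong)
    fix x
    have "(\<integral>\<^sup>+w. ennreal (\<Prod>i<n. h i x (w i)) \<partial>?PW) = (\<integral>\<^sup>+w. (\<Prod>i<n. ennreal (h i x (w i))) \<partial>?PW)"
      by (simp add: prod_ennreal h_def)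
    also have "\<dots> = (\<Prod>i<n. \<integral>\<^sup>+y. ennreal (h i x y) \<partial>N)"
      by (rule PP.product_nn_integral_prod) (auto simp: h_def)
    also have "\<dots> = (\<Prod>i<n. ennreal (exp (- (G i x)\<^sup>2 / (8 * (\<sigma> i)\<^sup>2))))"
      unfolding h_def by (intro prod.cong refl inner_factor \<sigma>)
    also have "\<dots> = ennreal (\<Prod>i<n. exp (- (G i x)\<^sup>2 / (8 * (\<sigma> i)\<^sup>2)))"
      by (simp add: prod_ennreal)
    finally show "(\<integral>\<^sup>+w. ennreal (\<Prod>i<n. h i x (w i)) \<partial>?PW) = ennreal (\<Prod>i<n. exp (- (G i x)\<^sup>2 / (8 * (\<sigma> i)\<^sup>2)))" .
  qed
  also have "\<dots> = (\<Prod>i<n. ennreal (1 / sqrt (1 + real (card S) / (4 * (\<sigma> i)\<^sup>2))))"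
    unfolding G_def by (rule outer_prod[OF u S \<sigma>])
  finally show ?thesis unfolding gauss_model_def h_def G_def .
qed

lemma meas_G:
  fixes u :: "nat \<Rightarrow> real"
  assumes "i < n"
  shows "(\<lambda>\<omega>. \<Sum>j<p. fst \<omega> (i, j) * u j) \<in> borel_measurable (gauss_model n p)"
  unfolding gauss_model_def by (rule measurable_compose[OF measurable_fst meas_row]) (use assms in auto)

lemma meas_W:
  assumes "i < n"
  shows "(\<lambda>\<omega>. snd \<omega> i) \<in> borel_measurable (gauss_model n p)"
proof -
  have "(\<lambda>w. w i) \<in> measurable (PiM {..<n} (\<lambda>_. N)) N" by (rule measurable_component_singleton) (use assms in auto)
  then have "(\<lambda>w. w i) \<in> borel_measurable (PiM {..<n} (\<lambda>_. N))" using measurable_cong_sets[OF refl sN] by simp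
  then show ?thesis unfolding gauss_model_def by (rule measurable_compose[OF measurable_snd])
qed


lemma meas_obj:
  "(\<lambda>\<omega>. mle_obj n1 n2 p \<sigma>1 \<sigma>2 bstar \<omega> b) \<in> borel_measurable (gauss_model (n1 + n2) p)"
  unfolding mle_obj_def obs_def
proof (rule borel_measurable_sum)
  fix i assume "i \<in> {..<n1 + n2}"
  then have i: "i < n1 + n2" by simp
  show "(\<lambda>\<omega>. (((\<Sum>j<p. fst \<omega> (i, j) * bstar j) + noise_sd n1 \<sigma>1 \<sigma>2 i * snd \<omega> i -
             (\<Sum>j<p. fst \<omega> (i, j) * b j)) / noise_sd n1 \<sigma>1 \<sigma>2 i)\<^sup>2) \<in> borel_measurable (gauss_model (n1 + n2) p)"
    by (intro meas_intros meas_G[OF i] meas_W[OF i])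
qed

lemma pair_bound:
  fixes bstar b :: "nat \<Rightarrow> real" and n1 n2 p :: nat
  assumes s1: "0 < \<sigma>1" and s2: "0 < \<sigma>2"
    and bs: "bstar \<in> Bps p s" and bb: "b \<in> Bps p s'"
    and d: "symdiff (supp_vec bstar) (supp_vec b) \<noteq> {}"
  shows "emeasure (gauss_model (n1 + n2) p)
           {\<omega> \<in> space (gauss_model (n1 + n2) p). mle_obj n1 n2 p \<sigma>1 \<sigma>2 bstar \<omega> b \<le> mle_obj n1 n2 p \<sigma>1 \<sigma>2 bstar \<omega> bstar}
         \<le> (\<Prod>i<n1 + n2. ennreal (1 / sqrt (1 + real (card (symdiff (supp_vec bstar) (supp_vec b)))
                                           / (4 * (noise_sd n1 \<sigma>1 \<sigma>2 i)\<^sup>2))))"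
proof -
  let ?M = "gauss_model (n1 + n2) p"
  let ?n = "n1 + n2"
  define \<sigma> where "\<sigma> i = noise_sd n1 \<sigma>1 \<sigma>2 i" for i
  have \<sigma>pos: "0 < \<sigma> i" for i using s1 s2 by (simp add: \<sigma>_def noise_sd_def)
  define u where "u j = bstar j - b j" for j
  define S where "S = {j. j < p \<and> u j \<noteq> 0}"
  have bs01: "bstar j = 0 \<or> bstar j = 1" "j \<ge> p \<Longrightarrow> bstar j = 0" for j using bs by (auto simp: Bps_def)
  have bb01: "b j = 0 \<or> b j = 1" "j \<ge> p \<Longrightarrow> b j = 0" for j using bb by (auto simp: Bps_def)
  have u: "u j = 0 \<or> u j = 1 \<or> u j = -1" for j using bs01(1)[of j] bb01(1)[of j] by (auto simp: u_def)
  have Seq: "S = symdiff (supp_vec bstar) (supp_vec b)"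
  proof -
    have "j < p" if "bstar j \<noteq> b j" for j
      using that bs01(2)[of j] bb01(2)[of j] by (cases "j < p") auto
    then show ?thesis unfolding S_def symdiff_def supp_vec_def u_def
      using bs01(1) bb01(1) by auto (metis zero_neq_one)+
  qed
  have Sne: "S \<noteq> {}" using d Seq by simp
  define G where "G i \<omega> = (\<Sum>j<p. fst \<omega> (i, j) * u j)" for i :: nat and \<omega> :: "(nat \<times> nat \<Rightarrow> real) \<times> (nat \<Rightarrow> real)"
  define D where "D \<omega> = (\<Sum>i<?n. (G i \<omega>)\<^sup>2 / (\<sigma> i)\<^sup>2 + 2 * G i \<omega> * snd \<omega> i / \<sigma> i)" for \<omega>
  have objdiff: "mle_obj n1 n2 p \<sigma>1 \<sigma>2 bstar \<omega> b - mle_obj n1 n2 p \<sigma>1 \<sigma>2 bstar \<omega> bstar = D \<omega>" for \<omega>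
  proof -
    have "mle_obj n1 n2 p \<sigma>1 \<sigma>2 bstar \<omega> b - mle_obj n1 n2 p \<sigma>1 \<sigma>2 bstar \<omega> bstar
        = (\<Sum>i<?n. ((G i \<omega> + \<sigma> i * snd \<omega> i) / \<sigma> i)\<^sup>2 - (\<sigma> i * snd \<omega> i / \<sigma> i)\<^sup>2)"
      unfolding mle_obj_def obs_def sum_subtractf[symmetric] \<sigma>_def[symmetric]
    proof (rule sum.cong[OF refl])
      fix i
      have "(\<Sum>j<p. fst \<omega> (i, j) * bstar j) - (\<Sum>j<p. fst \<omega> (i, j) * b j) = G i \<omega>"
        unfolding G_def u_def sum_subtractf[symmetric] by (simp add: algebra_simps)
      then show "(((\<Sum>j<p. fst \<omega> (i, j) * bstar j) + \<sigma> i * snd \<omega> i - (\<Sum>j<p. fst \<omega> (i, j) * b j)) / \<sigma> i)\<^sup>2 -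
          (((\<Sum>j<p. fst \<omega> (i, j) * bstar j) + \<sigma> i * snd \<omega> i - (\<Sum>j<p. fst \<omega> (i, j) * bstar j)) / \<sigma> i)\<^sup>2 =
          ((G i \<omega> + \<sigma> i * snd \<omega> i) / \<sigma> i)\<^sup>2 - (\<sigma> i * snd \<omega> i / \<sigma> i)\<^sup>2"
        by (smt (verit))
    qed
    also have "\<dots> = D \<omega>"
      unfolding D_def
    proof (rule sum.cong[OF refl])
      fix i
      have "\<sigma> i \<noteq> 0" using \<sigma>pos[of i] by simp
      then show "((G i \<omega> + \<sigma> i * snd \<omega> i) / \<sigma> i)\<^sup>2 - (\<sigma> i * snd \<omega> i / \<sigma> i)\<^sup>2
          = (G i \<omega>)\<^sup>2 / (\<sigma> i)\<^sup>2 + 2 * G i \<omega> * snd \<omega> i / \<sigma> i"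
        by (simp add: power2_eq_square field_simps)
    qed
    finally show ?thesis .
  qed
  have expD: "exp (- D \<omega> / 4) = (\<Prod>i<?n. exp (- (G i \<omega>)\<^sup>2 / (4 * (\<sigma> i)\<^sup>2) - G i \<omega> * snd \<omega> i / (2 * \<sigma> i)))" for \<omega>
  proof -
    have e: "- (G i \<omega>)\<^sup>2 / (4 * (\<sigma> i)\<^sup>2) - G i \<omega> * snd \<omega> i / (2 * \<sigma> i)
        = - (((G i \<omega>)\<^sup>2 / (\<sigma> i)\<^sup>2 + 2 * G i \<omega> * snd \<omega> i / \<sigma> i) / 4)" for i
    proof -
      have "\<sigma> i \<noteq> 0" using \<sigma>pos[of i] by simp
      then show ?thesis by (simp add: field_simps)
    qed
    have "- D \<omega> / 4 = (\<Sum>i<?n. - (G i \<omega>)\<^sup>2 / (4 * (\<sigma> i)\<^sup>2) - G i \<omega> * snd \<omega> i / (2 * \<sigma> i))"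
      unfolding e D_def by (simp add: sum_negf sum_divide_distrib)
    then show ?thesis by (simp add: exp_sum)
  qed
  let ?A = "{\<omega> \<in> space ?M. mle_obj n1 n2 p \<sigma>1 \<sigma>2 bstar \<omega> b \<le> mle_obj n1 n2 p \<sigma>1 \<sigma>2 bstar \<omega> bstar}"
  have Ameas: "?A \<in> sets ?M"
    using meas_obj[of n1 n2 p \<sigma>1 \<sigma>2 bstar b] meas_obj[of n1 n2 p \<sigma>1 \<sigma>2 bstar bstar] by (rule borel_measurable_le)
  have "emeasure ?M ?A = (\<integral>\<^sup>+\<omega>. indicator ?A \<omega> \<partial>?M)" using Ameas by simp
  also have "\<dots> \<le> (\<integral>\<^sup>+\<omega>. ennreal (exp (- D \<omega> / 4)) \<partial>?M)"
  proof (rule nn_integral_mono)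
    fix \<omega> assume "\<omega> \<in> space ?M"
    show "indicator ?A \<omega> \<le> ennreal (exp (- D \<omega> / 4))"
    proof (cases "\<omega> \<in> ?A")
      case True
      then have "D \<omega> \<le> 0" using objdiff[of \<omega>] by simp
      then have "1 \<le> exp (- D \<omega> / 4)" by simp
      then show ?thesis using True by simp
    qed simp
  qed
  also have "\<dots> = (\<Prod>i<?n. ennreal (1 / sqrt (1 + real (card S) / (4 * (\<sigma> i)\<^sup>2))))"
    unfolding expD G_def by (rule full_bound[OF u S_def Sne \<sigma>pos])
  finally show ?thesis unfolding Seq \<sigma>_def .
qed


lemma Bps_inj: "inj_on supp_vec (Bps p s)"
proof (rule inj_onI)
  fix b b' assume b: "b \<in> Bps p s" and b': "b' \<in> Bps p s" and eq: "supp_vec b = supp_vec b'"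
  show "b = b'"
  proof
    fix j
    have "b j = 0 \<or> b j = 1" "b' j = 0 \<or> b' j = 1" using b b' by (auto simp: Bps_def)
    moreover have "(b j \<noteq> 0) = (b' j \<noteq> 0)" using eq unfolding supp_vec_def by blast
    ultimately show "b j = b' j" by auto
  qed
qed

lemma Bps_image: "supp_vec ` Bps p s \<subseteq> {B. B \<subseteq> {..<p} \<and> card B = s}"
proof
  fix B assume "B \<in> supp_vec ` Bps p s"
  then obtain b where b: "b \<in> Bps p s" and B: "B = supp_vec b" by auto
  have "B \<subseteq> {..<p}"
  proof
    fix j assume "j \<in> B"
    then have "b j \<noteq> 0" using B by (simp add: supp_vec_def)
    then show "j \<in> {..<p}" using b by (auto simp: Bps_def not_less[symmetric])
  qed
  then show "B \<in> {B. B \<subseteq> {..<p} \<and> card B = s}" using b B by (auto simp: Bps_def)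
qed

lemma Bps_finite: "finite (Bps p s)"
proof -
  have "finite (supp_vec ` Bps p s)"
    by (rule finite_subset[OF Bps_image]) auto
  then show ?thesis using Bps_inj finite_imageD by blast
qed

lemma Bps_card: "card (Bps p s) \<le> p choose s"
proof -
  have "card (Bps p s) = card (supp_vec ` Bps p s)" using Bps_inj by (simp add: card_image)
  also have "\<dots> \<le> card {B. B \<subseteq> {..<p} \<and> card B = s}"
    by (rule card_mono[OF _ Bps_image]) auto
  also have "\<dots> = p choose s" by (subst n_subsets) auto
  finally show ?thesis .
qed

lemma prob_gauss: "prob_space (gauss_model n p)"
  unfolding gauss_model_def
  by (intro prob_space_pair prob_space_PiM prob_space_N)

lemma recovery_bound:
  fixes bstar :: "nat \<Rightarrow> real" and n1 n2 p s :: nat and \<delta> \<sigma>1 \<sigma>2 :: real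
  assumes s1: "0 < \<sigma>1" and s2: "0 < \<sigma>2" and bs: "bstar \<in> Bps p s"
    and \<delta>: "0 < \<delta>" and s: "1 \<le> s"
  shows "recovery_prob n1 n2 p s \<sigma>1 \<sigma>2 bstar \<delta> \<ge>
     1 - real (p choose s) * (\<Prod>i<n1 + n2. 1 / sqrt (1 + \<delta> * real s / (2 * (noise_sd n1 \<sigma>1 \<sigma>2 i)\<^sup>2)))"
proof -
  let ?M = "gauss_model (n1 + n2) p"
  interpret P: prob_space ?M by (rule prob_gauss)
  let ?obj = "\<lambda>\<omega> b. mle_obj n1 n2 p \<sigma>1 \<sigma>2 bstar \<omega> b"
  let ?good = "\<lambda>b. real (card (symdiff (supp_vec bstar) (supp_vec b))) < 2 * \<delta> * real s"
  define Bad where "Bad = {b \<in> Bps p s. \<not> ?good b}"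
  define A where "A b = {\<omega> \<in> space ?M. ?obj \<omega> b \<le> ?obj \<omega> bstar}" for b
  define E where "E = {\<omega> \<in> space ?M. \<forall>b \<in> mle_set n1 n2 p s \<sigma>1 \<sigma>2 bstar \<omega>. ?good b}"
  define Q where "Q = (\<Prod>i<n1 + n2. 1 / sqrt (1 + \<delta> * real s / (2 * (noise_sd n1 \<sigma>1 \<sigma>2 i)\<^sup>2)))"
  have Q0: "0 \<le> Q" unfolding Q_def
  proof (intro prod_nonneg)
    fix i
    have "0 \<le> \<delta> * real s / (2 * (noise_sd n1 \<sigma>1 \<sigma>2 i)\<^sup>2)" using \<delta> by simp
    then show "0 \<le> 1 / sqrt (1 + \<delta> * real s / (2 * (noise_sd n1 \<sigma>1 \<sigma>2 i)\<^sup>2))" by simp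
  qed
  have finB: "finite (Bps p s)" by (rule Bps_finite)
  have finBad: "finite Bad" unfolding Bad_def using finB by simp
  have Ameas: "A b \<in> P.events" for b
    unfolding A_def by (rule borel_measurable_le[OF meas_obj meas_obj])
  have Eeq: "E = {\<omega> \<in> space ?M. \<forall>b \<in> Bps p s. ?good b \<or> (\<exists>b' \<in> Bps p s. ?obj \<omega> b' < ?obj \<omega> b)}"
    unfolding E_def mle_set_def by (auto simp: not_le[symmetric])
  have Emeas: "E \<in> P.events"
    unfolding Eeq
  proof (rule sets.sets_Collect_finite_All'[OF _ finB])
    fix b assume "b \<in> Bps p s"
    show "{\<omega> \<in> space ?M. ?good b \<or> (\<exists>b' \<in> Bps p s. ?obj \<omega> b' < ?obj \<omega> b)} \<in> P.events"
    proof (rule sets.sets_Collect_disj)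
      show "{\<omega> \<in> space ?M. ?good b} \<in> P.events" by (rule sets.sets_Collect_const)
      show "{\<omega> \<in> space ?M. \<exists>b' \<in> Bps p s. ?obj \<omega> b' < ?obj \<omega> b} \<in> P.events"
        by (rule sets.sets_Collect_finite_Ex[OF _ finB]) (rule borel_measurable_less[OF meas_obj meas_obj])
    qed
  next
    show "Bps p s \<noteq> {}" using bs by auto
  qed
  have sub: "space ?M - (\<Union>b\<in>Bad. A b) \<subseteq> E"
  proof
    fix \<omega> assume w: "\<omega> \<in> space ?M - (\<Union>b\<in>Bad. A b)"
    show "\<omega> \<in> E" unfolding E_def
    proof (intro CollectI conjI ballI)
      show "\<omega> \<in> space ?M" using w by simp
      fix b assume b: "b \<in> mle_set n1 n2 p s \<sigma>1 \<sigma>2 bstar \<omega>"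
      then have bB: "b \<in> Bps p s" and le: "?obj \<omega> b \<le> ?obj \<omega> bstar" using bs by (auto simp: mle_set_def)
      show "?good b"
      proof (rule ccontr)
        assume "\<not> ?good b"
        then have "b \<in> Bad" using bB by (simp add: Bad_def)
        moreover have "\<omega> \<in> A b" using le w by (simp add: A_def)
        ultimately show False using w by blast
      qed
    qed
  qed
  have Abound: "P.prob (A b) \<le> Q" if b: "b \<in> Bad" for b
  proof -
    have bB: "b \<in> Bps p s" and bad: "2 * \<delta> * real s \<le> real (card (symdiff (supp_vec bstar) (supp_vec b)))"
      using b by (auto simp: Bad_def not_less)
    define d where "d = real (card (symdiff (supp_vec bstar) (supp_vec b)))"
    have "0 < 2 * \<delta> * real s" using \<delta> s by simp
    then have dpos: "0 < d" using bad d_def by linarith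
    then have ne: "symdiff (supp_vec bstar) (supp_vec b) \<noteq> {}" unfolding d_def by auto
    have "emeasure ?M (A b) \<le> (\<Prod>i<n1 + n2. ennreal (1 / sqrt (1 + d / (4 * (noise_sd n1 \<sigma>1 \<sigma>2 i)\<^sup>2))))"
      unfolding A_def d_def by (rule pair_bound[OF s1 s2 bs bB ne])
    also have "\<dots> = ennreal (\<Prod>i<n1 + n2. 1 / sqrt (1 + d / (4 * (noise_sd n1 \<sigma>1 \<sigma>2 i)\<^sup>2)))"
      by (rule prod_ennreal) (use dpos in simp)
    also have "\<dots> \<le> ennreal Q"
      unfolding Q_def
    proof (intro ennreal_leI prod_mono conjI)
      fix i assume "i \<in> {..<n1 + n2}"
      define t where "t = (noise_sd n1 \<sigma>1 \<sigma>2 i)\<^sup>2"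
      have t: "0 < t" unfolding t_def noise_sd_def using s1 s2 by simp
      have "\<delta> * real s / (2 * t) \<le> d / (4 * t)"
        using bad t unfolding d_def by (simp add: field_simps)
      moreover have "0 \<le> \<delta> * real s / (2 * t)" using \<delta> t by simp
      ultimately show "1 / sqrt (1 + d / (4 * t)) \<le> 1 / sqrt (1 + \<delta> * real s / (2 * t))"
        by (intro divide_left_mono real_sqrt_le_mono) (auto intro!: mult_pos_pos)
      show "0 \<le> 1 / sqrt (1 + d / (4 * t))" using dpos t by simp
    qed
    finally have "emeasure ?M (A b) \<le> ennreal Q" .
    then show ?thesis using Q0 Ameas by (simp add: P.emeasure_eq_measure)
  qed
  have "P.prob (\<Union>b\<in>Bad. A b) \<le> (\<Sum>b\<in>Bad. P.prob (A b))"
    by (rule P.finite_measure_subadditive_finite[OF finBad]) (use Ameas in auto)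
  also have "\<dots> \<le> (\<Sum>b\<in>Bad. Q)" by (rule sum_mono) (rule Abound)
  also have "\<dots> = real (card Bad) * Q" by simp
  also have "\<dots> \<le> real (p choose s) * Q"
  proof (rule mult_right_mono[OF _ Q0])
    have "card Bad \<le> card (Bps p s)" unfolding Bad_def by (rule card_mono[OF finB]) auto
    also have "\<dots> \<le> p choose s" by (rule Bps_card)
    finally show "real (card Bad) \<le> real (p choose s)" by simp
  qed
  finally have U: "P.prob (\<Union>b\<in>Bad. A b) \<le> real (p choose s) * Q" .
  have Umeas: "(\<Union>b\<in>Bad. A b) \<in> P.events" using finBad Ameas by auto
  have "1 - real (p choose s) * Q \<le> 1 - P.prob (\<Union>b\<in>Bad. A b)" using U by simp
  also have "\<dots> = P.prob (space ?M - (\<Union>b\<in>Bad. A b))" by (rule P.prob_compl[OF Umeas, symmetric])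
  also have "\<dots> \<le> P.prob E" by (rule P.finite_measure_mono[OF sub Emeas])
  finally show ?thesis unfolding recovery_prob_def E_def[symmetric] Q_def .
qed


lemma sum_split_if:
  fixes f :: "real \<Rightarrow> real"
  shows "(\<Sum>i<n1 + n2. f (noise_sd n1 a b i)) = real n1 * f a + real n2 * f b"
proof (induction n2)
  case 0
  have "(\<Sum>i<n1. f (noise_sd n1 a b i)) = (\<Sum>i<n1. f a)"
    by (intro sum.cong refl) (simp add: noise_sd_def)
  then show ?case by simp
next
  case (Suc m)
  have "(\<Sum>i<n1 + Suc m. f (noise_sd n1 a b i)) = (\<Sum>i<n1 + m. f (noise_sd n1 a b i)) + f b"
    by (simp add: noise_sd_def)
  then show ?case using Suc by (simp add: algebra_simps)
qed

lemma prod_Q: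
  assumes s1: "0 < \<sigma>1" and s2: "0 < \<sigma>2" and c: "0 \<le> c"
  shows "(\<Prod>i<n1 + n2. 1 / sqrt (1 + c / (2 * (noise_sd n1 \<sigma>1 \<sigma>2 i)\<^sup>2)))
       = exp (- (real n1 * ln (1 + c / (2 * \<sigma>1\<^sup>2)) + real n2 * ln (1 + c / (2 * \<sigma>2\<^sup>2))) / 2)"
proof -
  have pos: "0 < 1 + c / (2 * t\<^sup>2)" for t :: real
    using c by (simp add: add_pos_nonneg)
  have e: "1 / sqrt x = exp (- ln x / 2)" if "0 < x" for x :: real
  proof -
    have "sqrt x = exp (ln x / 2)" using that by (simp add: sqrt_def root_powr_inverse powr_def)
    then show ?thesis by (simp add: exp_minus inverse_eq_divide)
  qed
  have "(\<Prod>i<n1 + n2. 1 / sqrt (1 + c / (2 * (noise_sd n1 \<sigma>1 \<sigma>2 i)\<^sup>2)))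
      = (\<Prod>i<n1 + n2. exp (- ln (1 + c / (2 * (noise_sd n1 \<sigma>1 \<sigma>2 i)\<^sup>2)) / 2))"
    by (intro prod.cong refl e pos)
  also have "\<dots> = exp (\<Sum>i<n1 + n2. - ln (1 + c / (2 * (noise_sd n1 \<sigma>1 \<sigma>2 i)\<^sup>2)) / 2)"
    by (simp add: exp_sum)
  also have "(\<Sum>i<n1 + n2. - ln (1 + c / (2 * (noise_sd n1 \<sigma>1 \<sigma>2 i)\<^sup>2)) / 2)
      = real n1 * (- ln (1 + c / (2 * \<sigma>1\<^sup>2)) / 2) + real n2 * (- ln (1 + c / (2 * \<sigma>2\<^sup>2)) / 2)"
    by (rule sum_split_if[where f = "\<lambda>t. - ln (1 + c / (2 * t\<^sup>2)) / 2"])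
  finally show ?thesis by (simp add: field_simps)
qed

lemma binom_bound:
  fixes s p :: nat
  assumes s: "0 < s" and sp: "s < p"
  shows "real (p choose s) \<le> exp (real s * ln (real p / real s) + real (p - s) * ln (real p / real (p - s)))"
proof -
  define x where "x = real s / real p"
  have x0: "0 < x" and x1: "x < 1" using s sp unfolding x_def by auto
  have "1 = (x + (1 - x)) ^ p" by simp
  also have "\<dots> = (\<Sum>k\<le>p. real (p choose k) * x ^ k * (1 - x) ^ (p - k))"
    by (rule binomial_ring)
  also have "\<dots> \<ge> real (p choose s) * x ^ s * (1 - x) ^ (p - s)"
    by (rule member_le_sum[where f = "\<lambda>k. real (p choose k) * x ^ k * (1 - x) ^ (p - k)"])
       (use sp x0 x1 in auto)
  finally have b: "real (p choose s) * (x ^ s * (1 - x) ^ (p - s)) \<le> 1" by (simp add: mult.assoc)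
  have pp: "0 < x ^ s * (1 - x) ^ (p - s)" using x0 x1 by simp
  have "real (p choose s) \<le> 1 / (x ^ s * (1 - x) ^ (p - s))"
    using b pp by (simp add: field_simps)
  also have "1 / (x ^ s * (1 - x) ^ (p - s)) = exp (real s * ln (1 / x) + real (p - s) * ln (1 / (1 - x)))"
  proof -
    have "x ^ s = exp (real s * ln x)" using x0 by (simp add: ln_realpow[symmetric])
    moreover have "(1 - x) ^ (p - s) = exp (real (p - s) * ln (1 - x))" using x1 by (simp add: ln_realpow[symmetric])
    ultimately have "x ^ s * (1 - x) ^ (p - s) = exp (real s * ln x + real (p - s) * ln (1 - x))"
      by (simp add: exp_add)
    moreover have "real s * ln (1 / x) + real (p - s) * ln (1 / (1 - x)) = - (real s * ln x + real (p - s) * ln (1 - x))"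
      using x0 x1 by (simp add: ln_div)
    ultimately show ?thesis by (simp add: exp_minus[symmetric] inverse_eq_divide[symmetric] exp_diff)
  qed
  also have "1 / x = real p / real s" unfolding x_def by simp
  also have "1 / (1 - x) = real p / real (p - s)"
    unfolding x_def using s sp by (simp add: of_nat_diff field_simps)
  finally show ?thesis .
qed


lemma key_k:
  fixes bstar :: "nat \<Rightarrow> real" and n1 n2 p s :: nat and \<delta> \<sigma>1 \<sigma>2 :: real
  assumes s1: "0 < \<sigma>1" and s12: "\<sigma>1 < \<sigma>2" and bs: "bstar \<in> Bps p s"
    and \<delta>: "0 < \<delta>" and s: "1 \<le> s" and sp: "s < p"
  shows "1 - recovery_prob n1 n2 p s \<sigma>1 \<sigma>2 bstar \<delta> \<le>
     exp (real s * ln (real p / real s) + real (p - s) * ln (real p / real (p - s))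
          - (real n1 * ln (1 + \<delta> * real s / (2 * \<sigma>1\<^sup>2)) + real n2 * ln (1 + \<delta> * real s / (2 * \<sigma>2\<^sup>2))) / 2)"
proof -
  have s2: "0 < \<sigma>2" using s1 s12 by simp
  define B where "B = real s * ln (real p / real s) + real (p - s) * ln (real p / real (p - s))"
  define T where "T = real n1 * ln (1 + \<delta> * real s / (2 * \<sigma>1\<^sup>2)) + real n2 * ln (1 + \<delta> * real s / (2 * \<sigma>2\<^sup>2))"
  have R: "recovery_prob n1 n2 p s \<sigma>1 \<sigma>2 bstar \<delta> \<ge>
     1 - real (p choose s) * (\<Prod>i<n1 + n2. 1 / sqrt (1 + \<delta> * real s / (2 * (noise_sd n1 \<sigma>1 \<sigma>2 i)\<^sup>2)))"
    by (rule recovery_bound[OF s1 s2 bs \<delta> s])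
  have Q: "(\<Prod>i<n1 + n2. 1 / sqrt (1 + \<delta> * real s / (2 * (noise_sd n1 \<sigma>1 \<sigma>2 i)\<^sup>2))) = exp (- T / 2)"
    unfolding T_def by (rule prod_Q[OF s1 s2]) (use \<delta> in simp)
  have C: "real (p choose s) \<le> exp B" unfolding B_def by (rule binom_bound) (use s sp in auto)
  have "1 - recovery_prob n1 n2 p s \<sigma>1 \<sigma>2 bstar \<delta> \<le> real (p choose s) * exp (- T / 2)"
    using R Q by simp
  also have "\<dots> \<le> exp B * exp (- T / 2)" by (rule mult_right_mono[OF C]) simp
  also have "\<dots> = exp (B - T / 2)" by (simp add: exp_add[symmetric])
  finally show ?thesis unfolding B_def T_def .
qed

lemma rp_le_1: "recovery_prob n1 n2 p s \<sigma>1 \<sigma>2 bstar \<delta> \<le> 1"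
proof -
  interpret P: prob_space "gauss_model (n1 + n2) p" by (rule prob_gauss)
  show ?thesis unfolding recovery_prob_def by (rule P.prob_le_1)
qed

lemma final_limit:
  fixes rp r nstar :: "nat \<Rightarrow> real" and \<epsilon> :: real
  assumes r: "r \<longlonglongrightarrow> 0" and \<epsilon>: "0 < \<epsilon>"
    and lb: "eventually (\<lambda>k. rp k \<ge> 1 - exp (- (\<epsilon> + r k) * nstar k / 2)) sequentially"
    and ub: "\<And>k. rp k \<le> 1"
    and ns: "filterlim (\<lambda>k. nstar k / 2) at_top sequentially"
  shows "rp \<longlonglongrightarrow> 1"
proof -
  have er: "(\<lambda>k. \<epsilon> + r k) \<longlonglongrightarrow> \<epsilon>" using tendsto_add[OF tendsto_const r] by simp
  have Y: "filterlim (\<lambda>k. (\<epsilon> + r k) * (nstar k / 2)) at_top sequentially"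
    by (rule filterlim_tendsto_pos_mult_at_top[OF er \<epsilon> ns])
  have Y': "filterlim (\<lambda>k. - ((\<epsilon> + r k) * (nstar k / 2))) at_bot sequentially"
    using Y by (simp add: filterlim_uminus_at_top)
  have E: "(\<lambda>k. exp (- ((\<epsilon> + r k) * (nstar k / 2)))) \<longlonglongrightarrow> 0"
    by (rule filterlim_compose[OF exp_at_bot Y'])
  have E': "(\<lambda>k. 1 - exp (- (\<epsilon> + r k) * nstar k / 2)) \<longlonglongrightarrow> 1 - 0"
  proof -
    have eq: "exp (- (\<epsilon> + r k) * nstar k / 2) = exp (- ((\<epsilon> + r k) * (nstar k / 2)))" for k
      by (intro arg_cong[where f=exp]) (simp add: algebra_simps)
    show ?thesis unfolding eq by (rule tendsto_diff[OF tendsto_const E])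
  qed
  have E'': "(\<lambda>k. 1 - exp (- (\<epsilon> + r k) * nstar k / 2)) \<longlonglongrightarrow> 1" using E' by simp
  show ?thesis
    by (rule tendsto_sandwich[OF lb _ E'' tendsto_const]) (use ub in simp)
qed


lemma case1:
  fixes p s n1 n2 :: "nat \<Rightarrow> nat" and \<sigma>1 \<sigma>2 :: "nat \<Rightarrow> real" and bstar :: "nat \<Rightarrow> nat \<Rightarrow> real"
    and nstar :: "nat \<Rightarrow> real" and \<delta> \<epsilon> :: real
  assumes sig1_pos: "\<And>k. 0 < \<sigma>1 k" and sig12: "\<And>k. \<sigma>1 k < \<sigma>2 k"
    and bstar_in: "\<And>k. bstar k \<in> Bps (p k) (s k)"
    and delta: "0 < \<delta>"
    and so: "(\<lambda>k. real (s k)) \<in> o(\<lambda>k. real (p k))"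
    and sl: "filterlim s at_top sequentially"
    and ns: "\<And>k. nstar k = 2 * real (s k) * ln (real (p k) / real (s k))"
    and eps_pos: "0 < \<epsilon>"
    and threshold: "eventually (\<lambda>k.
        real (n1 k) * ln (1 + \<delta> * real (s k) / (2 * (\<sigma>1 k)\<^sup>2))
      + real (n2 k) * ln (1 + \<delta> * real (s k) / (2 * (\<sigma>2 k)\<^sup>2))
      \<ge> (1 + \<epsilon>) * nstar k) sequentially"
  shows "\<exists>r :: nat \<Rightarrow> real. r \<longlonglongrightarrow> 0 \<and>
           eventually (\<lambda>k. recovery_prob (n1 k) (n2 k) (p k) (s k) (\<sigma>1 k) (\<sigma>2 k) (bstar k) \<delta>
              \<ge> 1 - exp (- (\<epsilon> + r k) * nstar k / 2)) sequentially
         \<and> filterlim (\<lambda>k. nstar k / 2) at_top sequentially"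
proof -
  define L where "L k = ln (real (p k) / real (s k))" for k
  have s1: "eventually (\<lambda>k. 1 \<le> s k) sequentially" using sl by (simp add: filterlim_at_top)
  have rs: "filterlim (\<lambda>k. real (s k)) at_top sequentially"
    by (rule filterlim_compose[OF filterlim_real_sequentially sl])
  have PS: "filterlim (\<lambda>k. real (p k) / real (s k)) at_top sequentially"
    unfolding filterlim_at_top
  proof
    fix Z :: real
    define c where "c = 1 / max Z 1"
    have c: "0 < c" unfolding c_def by simp
    have ev: "eventually (\<lambda>k. norm (real (s k)) \<le> c * norm (real (p k))) sequentially"
      by (rule landau_o.smallD[OF so c])
    show "eventually (\<lambda>k. Z \<le> real (p k) / real (s k)) sequentially"
      using ev s1
    proof eventually_elim
      case (elim k)
      then have a: "real (s k) \<le> c * real (p k)" and b: "1 \<le> real (s k)" by auto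
      have "max Z 1 * real (s k) \<le> real (p k)"
        using mult_left_mono[OF a, of "max Z 1"] unfolding c_def by simp
      then have "max Z 1 \<le> real (p k) / real (s k)" using b by (subst pos_le_divide_eq) auto
      then show ?case by simp
    qed
  qed
  have Llim: "filterlim L at_top sequentially"
    unfolding L_def by (rule filterlim_compose[OF ln_at_top PS])
  define r where "r k = - inverse (L k)" for k
  have r0: "r \<longlonglongrightarrow> 0"
    unfolding r_def using tendsto_minus[OF tendsto_inverse_0_at_top[OF Llim]] by simp
  have L1: "eventually (\<lambda>k. 1 \<le> L k) sequentially" using Llim by (simp add: filterlim_at_top)
  have lb: "eventually (\<lambda>k. recovery_prob (n1 k) (n2 k) (p k) (s k) (\<sigma>1 k) (\<sigma>2 k) (bstar k) \<delta>
              \<ge> 1 - exp (- (\<epsilon> + r k) * nstar k / 2)) sequentially"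
    using s1 L1 threshold
  proof eventually_elim
    case (elim k)
    then have sk: "1 \<le> s k" and Lk: "1 \<le> L k" and th: "real (n1 k) * ln (1 + \<delta> * real (s k) / (2 * (\<sigma>1 k)\<^sup>2))
      + real (n2 k) * ln (1 + \<delta> * real (s k) / (2 * (\<sigma>2 k)\<^sup>2)) \<ge> (1 + \<epsilon>) * nstar k" by auto
    have sp: "s k < p k"
    proof -
      have lnpos: "0 < ln (real (p k) / real (s k))" using Lk unfolding L_def by simp
      have "p k \<noteq> 0" using lnpos by (cases "p k = 0") auto
      then have "1 < real (p k) / real (s k)" using sk lnpos by (subst (asm) ln_gt_zero_iff) (auto intro!: divide_pos_pos)
      then show ?thesis using sk by (simp add: field_simps)
    qed
    have K: "1 - recovery_prob (n1 k) (n2 k) (p k) (s k) (\<sigma>1 k) (\<sigma>2 k) (bstar k) \<delta> \<le>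
     exp (real (s k) * ln (real (p k) / real (s k)) + real (p k - s k) * ln (real (p k) / real (p k - s k))
          - (real (n1 k) * ln (1 + \<delta> * real (s k) / (2 * (\<sigma>1 k)\<^sup>2)) + real (n2 k) * ln (1 + \<delta> * real (s k) / (2 * (\<sigma>2 k)\<^sup>2))) / 2)"
      by (rule key_k[OF sig1_pos sig12 bstar_in delta sk sp])
    have ps: "real (p k - s k) * ln (real (p k) / real (p k - s k)) \<le> real (s k)"
    proof -
      have pos: "0 < real (p k - s k)" using sp by simp
      have "ln (real (p k) / real (p k - s k)) \<le> real (p k) / real (p k - s k) - 1"
        by (rule ln_le_minus_one) (use pos sp in simp)
      then have "real (p k - s k) * ln (real (p k) / real (p k - s k)) \<le> real (p k - s k) * (real (p k) / real (p k - s k) - 1)"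
        by (rule mult_left_mono) (use pos in simp)
      also have "\<dots> = real (s k)" using pos sp by (simp add: field_simps of_nat_diff)
      finally show ?thesis .
    qed
    have Lpos: "0 < L k" using Lk by simp
    have "real (s k) * ln (real (p k) / real (s k)) + real (p k - s k) * ln (real (p k) / real (p k - s k))
          - (real (n1 k) * ln (1 + \<delta> * real (s k) / (2 * (\<sigma>1 k)\<^sup>2)) + real (n2 k) * ln (1 + \<delta> * real (s k) / (2 * (\<sigma>2 k)\<^sup>2))) / 2
        \<le> real (s k) * L k + real (s k) - (1 + \<epsilon>) * nstar k / 2"
    proof -
      have "(1 + \<epsilon>) * nstar k / 2 \<le> (real (n1 k) * ln (1 + \<delta> * real (s k) / (2 * (\<sigma>1 k)\<^sup>2)) + real (n2 k) * ln (1 + \<delta> * real (s k) / (2 * (\<sigma>2 k)\<^sup>2))) / 2"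
        using th by (rule divide_right_mono) simp
      then show ?thesis using ps unfolding L_def by linarith
    qed
    also have "\<dots> = - (\<epsilon> + r k) * nstar k / 2"
      unfolding ns r_def L_def[symmetric] using Lpos by (simp add: field_simps)
    finally have "1 - recovery_prob (n1 k) (n2 k) (p k) (s k) (\<sigma>1 k) (\<sigma>2 k) (bstar k) \<delta> \<le> exp (- (\<epsilon> + r k) * nstar k / 2)"
      using K by (meson exp_le_cancel_iff order_trans)
    then show ?case by simp
  qed
  have nslim: "filterlim (\<lambda>k. nstar k / 2) at_top sequentially"
  proof (rule filterlim_at_top_mono[OF rs])
    show "eventually (\<lambda>k. real (s k) \<le> nstar k / 2) sequentially"
      using L1
    proof eventually_elim
      case (elim k)
      then have "real (s k) * 1 \<le> real (s k) * L k" by (intro mult_left_mono) auto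
      then show ?case unfolding ns L_def by simp
    qed
  qed
  show ?thesis using r0 lb nslim by blast
qed

lemma case2:
  fixes p s n1 n2 :: "nat \<Rightarrow> nat" and \<sigma>1 \<sigma>2 :: "nat \<Rightarrow> real" and bstar :: "nat \<Rightarrow> nat \<Rightarrow> real"
    and nstar :: "nat \<Rightarrow> real" and \<delta> \<epsilon> \<alpha> :: real
  assumes p_lim: "filterlim p at_top sequentially"
    and sig1_pos: "\<And>k. 0 < \<sigma>1 k" and sig12: "\<And>k. \<sigma>1 k < \<sigma>2 k"
    and bstar_in: "\<And>k. bstar k \<in> Bps (p k) (s k)"
    and delta: "0 < \<delta>"
    and a0: "0 < \<alpha>" and a1: "\<alpha> < 1" and sa: "\<And>k. real (s k) = \<alpha> * real (p k)"
    and ns: "\<And>k. nstar k = 2 * bin_entropy \<alpha> * real (p k)"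
    and eps_pos: "0 < \<epsilon>"
    and threshold: "eventually (\<lambda>k.
        real (n1 k) * ln (1 + \<delta> * real (s k) / (2 * (\<sigma>1 k)\<^sup>2))
      + real (n2 k) * ln (1 + \<delta> * real (s k) / (2 * (\<sigma>2 k)\<^sup>2))
      \<ge> (1 + \<epsilon>) * nstar k) sequentially"
  shows "\<exists>r :: nat \<Rightarrow> real. r \<longlonglongrightarrow> 0 \<and>
           eventually (\<lambda>k. recovery_prob (n1 k) (n2 k) (p k) (s k) (\<sigma>1 k) (\<sigma>2 k) (bstar k) \<delta>
              \<ge> 1 - exp (- (\<epsilon> + r k) * nstar k / 2)) sequentially
         \<and> filterlim (\<lambda>k. nstar k / 2) at_top sequentially"
proof -
  have rp: "filterlim (\<lambda>k. real (p k)) at_top sequentially"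
    by (rule filterlim_compose[OF filterlim_real_sequentially p_lim])
  have hpos: "0 < bin_entropy \<alpha>"
  proof -
    have l1: "ln \<alpha> < 0" and l2: "ln (1 - \<alpha>) < 0" using a0 a1 by auto
    have "0 < \<alpha> * (- ln \<alpha>)" using a0 l1 by (intro mult_pos_pos) auto
    moreover have "0 < (1 - \<alpha>) * (- ln (1 - \<alpha>))" using a1 l2 by (intro mult_pos_pos) auto
    moreover have "bin_entropy \<alpha> = \<alpha> * (- ln \<alpha>) + (1 - \<alpha>) * (- ln (1 - \<alpha>))"
      unfolding bin_entropy_def by (simp add: algebra_simps)
    ultimately show ?thesis by linarith
  qed
  have pbig: "eventually (\<lambda>k. 1 / \<alpha> \<le> real (p k)) sequentially" using rp by (simp add: filterlim_at_top)
  have lb: "eventually (\<lambda>k. recovery_prob (n1 k) (n2 k) (p k) (s k) (\<sigma>1 k) (\<sigma>2 k) (bstar k) \<delta>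
              \<ge> 1 - exp (- (\<epsilon> + 0) * nstar k / 2)) sequentially"
    using pbig threshold
  proof eventually_elim
    case (elim k)
    then have pk: "1 / \<alpha> \<le> real (p k)" and th: "real (n1 k) * ln (1 + \<delta> * real (s k) / (2 * (\<sigma>1 k)\<^sup>2))
      + real (n2 k) * ln (1 + \<delta> * real (s k) / (2 * (\<sigma>2 k)\<^sup>2)) \<ge> (1 + \<epsilon>) * nstar k" by auto
    have "1 \<le> \<alpha> * real (p k)" using pk a0 by (simp add: field_simps)
    then have sk: "1 \<le> s k" using sa[of k] by simp
    have ppos: "0 < real (p k)" using pk a0 by (smt (verit) divide_pos_pos)
    have sp: "s k < p k" using sa[of k] ppos a1
    proof -
      have "real (s k) < real (p k)" using sa[of k] ppos a1 by simp
      then show ?thesis by simp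
    qed
    have K: "1 - recovery_prob (n1 k) (n2 k) (p k) (s k) (\<sigma>1 k) (\<sigma>2 k) (bstar k) \<delta> \<le>
     exp (real (s k) * ln (real (p k) / real (s k)) + real (p k - s k) * ln (real (p k) / real (p k - s k))
          - (real (n1 k) * ln (1 + \<delta> * real (s k) / (2 * (\<sigma>1 k)\<^sup>2)) + real (n2 k) * ln (1 + \<delta> * real (s k) / (2 * (\<sigma>2 k)\<^sup>2))) / 2)"
      by (rule key_k[OF sig1_pos sig12 bstar_in delta sk sp])
    have B: "real (s k) * ln (real (p k) / real (s k)) + real (p k - s k) * ln (real (p k) / real (p k - s k))
        = bin_entropy \<alpha> * real (p k)"
    proof -
      have e1: "real (p k) / real (s k) = 1 / \<alpha>" using sa[of k] ppos a0 by simp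
      have e2: "real (p k - s k) = (1 - \<alpha>) * real (p k)" using sp sa[of k] by (simp add: of_nat_diff algebra_simps)
      have e3: "real (p k) / real (p k - s k) = 1 / (1 - \<alpha>)" unfolding e2 using ppos a1 by simp
      have l1: "ln (1 / \<alpha>) = - ln \<alpha>" using a0 by (simp add: ln_div)
      have l2: "ln (1 / (1 - \<alpha>)) = - ln (1 - \<alpha>)" using a1 by (simp add: ln_div)
      show ?thesis unfolding e1 e3 l1 l2 unfolding e2 sa bin_entropy_def by (simp add: algebra_simps)
    qed
    have "real (s k) * ln (real (p k) / real (s k)) + real (p k - s k) * ln (real (p k) / real (p k - s k))
          - (real (n1 k) * ln (1 + \<delta> * real (s k) / (2 * (\<sigma>1 k)\<^sup>2)) + real (n2 k) * ln (1 + \<delta> * real (s k) / (2 * (\<sigma>2 k)\<^sup>2))) / 2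
        \<le> - (\<epsilon> + 0) * nstar k / 2"
      using th unfolding B ns by (simp add: algebra_simps)
    then have "1 - recovery_prob (n1 k) (n2 k) (p k) (s k) (\<sigma>1 k) (\<sigma>2 k) (bstar k) \<delta> \<le> exp (- (\<epsilon> + 0) * nstar k / 2)"
      using K by (meson exp_le_cancel_iff order_trans)
    then show ?case by simp
  qed
  have nslim: "filterlim (\<lambda>k. nstar k / 2) at_top sequentially"
  proof -
    have "filterlim (\<lambda>k. bin_entropy \<alpha> * real (p k)) at_top sequentially"
      by (rule filterlim_tendsto_pos_mult_at_top[OF tendsto_const hpos rp])
    then show ?thesis unfolding ns by simp
  qed
  have "(\<lambda>k. 0 :: real) \<longlonglongrightarrow> 0" by simp
  then show ?thesis using lb nslim by blast
qed

theorem theorem2: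
  fixes p s n1 n2 :: "nat \<Rightarrow> nat"
    and \<sigma>1 \<sigma>2 :: "nat \<Rightarrow> real"
    and bstar :: "nat \<Rightarrow> nat \<Rightarrow> real"
    and nstar :: "nat \<Rightarrow> real"
    and \<delta> \<epsilon> :: real
  assumes p_lim: "filterlim p at_top sequentially"
    and n1_pos: "\<And>k. n1 k \<ge> 1" and n2_pos: "\<And>k. n2 k \<ge> 1"
    and sig1_pos: "\<And>k. 0 < \<sigma>1 k" and sig12: "\<And>k. \<sigma>1 k < \<sigma>2 k"
    and bstar_in: "\<And>k. bstar k \<in> Bps (p k) (s k)"
    and delta: "0 < \<delta>" "\<delta> < 1"
    and settings:
      "((\<lambda>k. real (s k)) \<in> o(\<lambda>k. real (p k))
          \<and> filterlim s at_top sequentially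
          \<and> (\<forall>k. nstar k = 2 * real (s k) * ln (real (p k) / real (s k))))
       \<or> (\<exists>\<alpha>. 0 < \<alpha> \<and> \<alpha> < 1 \<and> (\<forall>k. real (s k) = \<alpha> * real (p k))
          \<and> (\<forall>k. nstar k = 2 * bin_entropy \<alpha> * real (p k)))"
    and eps_pos: "0 < \<epsilon>"
    and threshold: "eventually (\<lambda>k.
        real (n1 k) * ln (1 + \<delta> * real (s k) / (2 * (\<sigma>1 k)\<^sup>2))
      + real (n2 k) * ln (1 + \<delta> * real (s k) / (2 * (\<sigma>2 k)\<^sup>2))
      \<ge> (1 + \<epsilon>) * nstar k) sequentially"
  shows "(\<exists>r :: nat \<Rightarrow> real. r \<longlonglongrightarrow> 0 \<and>
           eventually (\<lambda>k. recovery_prob (n1 k) (n2 k) (p k) (s k) (\<sigma>1 k) (\<sigma>2 k) (bstar k) \<delta>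
              \<ge> 1 - exp (- (\<epsilon> + r k) * nstar k / 2)) sequentially)
         \<and> ((\<lambda>k. recovery_prob (n1 k) (n2 k) (p k) (s k) (\<sigma>1 k) (\<sigma>2 k) (bstar k) \<delta>) \<longlonglongrightarrow> 1)"
proof -
  have main: "\<exists>r :: nat \<Rightarrow> real. r \<longlonglongrightarrow> 0 \<and>
           eventually (\<lambda>k. recovery_prob (n1 k) (n2 k) (p k) (s k) (\<sigma>1 k) (\<sigma>2 k) (bstar k) \<delta>
              \<ge> 1 - exp (- (\<epsilon> + r k) * nstar k / 2)) sequentially
         \<and> filterlim (\<lambda>k. nstar k / 2) at_top sequentially"
    using settings
  proof (elim disjE conjE exE)
    assume so: "(\<lambda>k. real (s k)) \<in> o(\<lambda>k. real (p k))" and sl: "filterlim s at_top sequentially"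
      and ns: "\<forall>k. nstar k = 2 * real (s k) * ln (real (p k) / real (s k))"
    show ?thesis by (rule case1[OF sig1_pos sig12 bstar_in delta(1) so sl _ eps_pos threshold]) (use ns in simp)
  next
    fix \<alpha> assume a0: "0 < \<alpha>" and a1: "\<alpha> < 1" and sa: "\<forall>k. real (s k) = \<alpha> * real (p k)"
      and ns: "\<forall>k. nstar k = 2 * bin_entropy \<alpha> * real (p k)"
    show ?thesis by (rule case2[OF p_lim sig1_pos sig12 bstar_in delta(1) a0 a1 _ _ eps_pos threshold]) (use sa ns in simp_all)
  qed
  then obtain r :: "nat \<Rightarrow> real" where r0: "r \<longlonglongrightarrow> 0"
    and lb: "eventually (\<lambda>k. recovery_prob (n1 k) (n2 k) (p k) (s k) (\<sigma>1 k) (\<sigma>2 k) (bstar k) \<delta>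
              \<ge> 1 - exp (- (\<epsilon> + r k) * nstar k / 2)) sequentially"
    and nslim: "filterlim (\<lambda>k. nstar k / 2) at_top sequentially" by blast
  have lim: "(\<lambda>k. recovery_prob (n1 k) (n2 k) (p k) (s k) (\<sigma>1 k) (\<sigma>2 k) (bstar k) \<delta>) \<longlonglongrightarrow> 1"
    by (rule final_limit[OF r0 eps_pos lb rp_le_1 nslim])
  show ?thesis using r0 lb lim by blast
qed

end
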